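(* Let $G$ be a graph on $d+2$ vertices whose adjacency matrix has second largest eigenvalue $\lambda_2$. If $G$ has a spherical representation in $\mathbb{R}^d$ with distance ratio $k$, then $k = \sqrt{\frac{1}{\lambda_2}+1}$; in particular $\lambda_2 > 0$.
   Context: Graphs are finite and simple; adjacency eigenvalues are listed with multiplicity as $\lambda_1\geq\lambda_2\geq\cdots$. A finite set $S\subset\mathbb{R}^d$ is a 2-distance set if $\{\|p-q\| : p,q\in S, p\neq q\}$ has exactly two elements $\alpha_1>\alpha_2$; its distance ratio is $k=\alpha_1/\alpha_2$; its associated graph has vertex set $S$ with $p,q$ adjacent iff $\|p-q\|=\alpha_1$. $G$ has a spherical representation in $\mathbb{R}^d$ with ratio $k$ if some 2-distance set in $\mathbb{R}^d$ with ratio $k$, lying on a $(d-1)$-dimensional sphere, has associated graph $G$. *)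

theory Defs
  imports "HOL-Analysis.Analysis" "Jordan_Normal_Form.Char_Poly"
    "HOL-Library.Multiset"
begin

definition simple_graph :: "nat set \<Rightarrow> (nat \<Rightarrow> nat \<Rightarrow> bool) \<Rightarrow> bool" where
  "simple_graph V E \<longleftrightarrow> finite V \<and>
     (\<forall>i j. E i j \<longrightarrow> i \<in> V \<and> j \<in> V \<and> i \<noteq> j \<and> E j i)"

definition adj_matrix :: "nat \<Rightarrow> (nat \<Rightarrow> nat \<Rightarrow> bool) \<Rightarrow> real Matrix.mat" where
  "adj_matrix n E = Matrix.mat n n (\<lambda>(i, j). if E i j then 1 else 0)"

text \<open>Adjacency eigenvalues with multiplicity (roots of the characteristic polynomial),
  listed in non-increasing order lambda_1 >= lambda_2 >= ...\<close>
definition adj_eigenvalues :: "nat \<Rightarrow> (nat \<Rightarrow> nat \<Rightarrow> bool) \<Rightarrow> real list" where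
  "adj_eigenvalues n E = rev (sorted_list_of_multiset (proots (char_poly (adj_matrix n E))))"

definition dist_set :: "'a::metric_space set \<Rightarrow> real set" where
  "dist_set S = {dist x y | x y. x \<in> S \<and> y \<in> S \<and> x \<noteq> y}"

definition two_distance_set :: "'a::metric_space set \<Rightarrow> bool" where
  "two_distance_set S \<longleftrightarrow> finite S \<and> card (dist_set S) = 2"

definition distance_ratio :: "'a::metric_space set \<Rightarrow> real" where
  "distance_ratio S = Max (dist_set S) / Min (dist_set S)"

definition associated_graph :: "'a::metric_space set \<Rightarrow> 'a \<Rightarrow> 'a \<Rightarrow> bool" where
  "associated_graph S x y \<longleftrightarrow> x \<in> S \<and> y \<in> S \<and> x \<noteq> y \<and> dist x y = Max (dist_set S)"

text \<open>G = (V, E) has a spherical representation in R^d (d = CARD('n)) with ratio k: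
  an injective placement p of the vertices whose image is a 2-distance set with ratio k,
  lying on a sphere, with associated graph equal (via p) to G.\<close>
definition has_spherical_rep ::
  "'n::finite itself \<Rightarrow> nat set \<Rightarrow> (nat \<Rightarrow> nat \<Rightarrow> bool) \<Rightarrow> real \<Rightarrow> bool" where
  "has_spherical_rep _ V E k \<longleftrightarrow>
     (\<exists>p :: nat \<Rightarrow> real^'n.
        inj_on p V \<and> two_distance_set (p ` V) \<and> distance_ratio (p ` V) = k \<and>
        (\<exists>c r. p ` V \<subseteq> sphere c r) \<and>
        (\<forall>i\<in>V. \<forall>j\<in>V. E i j \<longleftrightarrow> associated_graph (p ` V) (p i) (p j)))"

end

theory Submission
  imports Defs
begin


lemma sym_inner:
  fixes M :: "real^'m^'m"
  assumes "transpose M = M"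
  shows "inner x (M *v y) = inner (M *v x) y"
proof -
  have "inner (M *v x) y = inner (x v* transpose M) y" by simp
  also have "\<dots> = inner x (transpose M *v y)" by (rule dot_lmul_matrix)
  finally show ?thesis using assms by simp
qed

lemma ring_aux: "2 * t * a + t^2 * (b - l * a) = (l + 2 * t * a + t^2 * b) - l * (1 + t^2 * (a::real))"
  by (simp add: algebra_simps)

lemma ring_aux2: "t * (2 * a + t * C) = 2 * t * a + t^2 * (C::real)"
  by (simp add: algebra_simps power2_eq_square)

lemma eig_in_subspace:
  fixes M :: "real^'m^'m"
  assumes sym: "transpose M = M" and S: "subspace S" and inv: "\<And>x. x\<in>S \<Longrightarrow> M *v x \<in> S"
    and ne: "x0 \<in> S" "x0 \<noteq> 0"
  shows "\<exists>u\<in>S. norm u = 1 \<and> (\<exists>e. M *v u = e *\<^sub>R u)"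
proof -
  define K where "K = sphere 0 1 \<inter> S"
  have cK: "compact K" unfolding K_def
    using closed_subspace[OF S] compact_sphere by (intro compact_Int_closed) auto
  have "x0 /\<^sub>R norm x0 \<in> K" unfolding K_def using ne S by (auto simp: subspace_scale)
  hence neK: "K \<noteq> {}" by blast
  have cont: "continuous_on K (\<lambda>x. inner x (M *v x))"
    by (intro continuous_intros)
  obtain u where uK: "u \<in> K" and umax: "\<And>y. y \<in> K \<Longrightarrow> inner y (M *v y) \<le> inner u (M *v u)"
    using continuous_attains_sup[OF cK neK cont] by blast
  define l where "l = inner u (M *v u)"
  have uS: "u \<in> S" and nu: "norm u = 1" using uK by (auto simp: K_def)
  have uu: "inner u u = 1" using nu by (simp add: dot_square_norm)
  have ray: "inner y (M *v y) \<le> l * inner y y" if yS: "y \<in> S" for y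
  proof (cases "y = 0")
    case True then show ?thesis by simp
  next
    case False
    let ?z = "y /\<^sub>R norm y"
    have "?z \<in> K" using yS False S by (auto simp: K_def subspace_scale)
    hence "inner ?z (M *v ?z) \<le> l" using umax l_def by blast
    moreover have "inner ?z (M *v ?z) = inner y (M *v y) / (norm y)^2"
      by (simp add: matrix_vector_mult_scaleR power2_eq_square field_simps)
    moreover have "inner y y = (norm y)^2" by (simp add: dot_square_norm)
    moreover have "norm y > 0" using False by simp
    ultimately show ?thesis by (simp add: field_simps)
  qed
  define w where "w = M *v u - l *\<^sub>R u"
  have wS: "w \<in> S" unfolding w_def using inv[OF uS] uS S
    by (simp add: subspace_diff subspace_scale)
  have wu: "inner w u = 0" unfolding w_def using uu
    by (simp add: inner_diff_left l_def inner_commute[of "M *v u" u])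
  have wMu: "inner w (M *v u) = inner w w"
  proof -
    have "M *v u = w + l *\<^sub>R u" unfolding w_def by simp
    hence "inner w (M *v u) = inner w w + l * inner w u" by (simp add: inner_add_right)
    thus ?thesis using wu by simp
  qed
  define C where "C = inner w (M *v w) - l * inner w w"
  have key: "2 * t * inner w w + t^2 * C \<le> 0" for t
  proof -
    have "u + t *\<^sub>R w \<in> S" using uS wS S by (simp add: subspace_add subspace_scale)
    from ray[OF this] have le: "inner (u + t *\<^sub>R w) (M *v (u + t *\<^sub>R w)) \<le> l * inner (u + t *\<^sub>R w) (u + t *\<^sub>R w)" .
    have eq1: "inner (u + t *\<^sub>R w) (M *v (u + t *\<^sub>R w)) = l + 2 * t * inner w w + t^2 * inner w (M *v w)"
    proof -
      have "inner u (M *v w) = inner (M *v u) w" by (rule sym_inner[OF sym])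
      also have "\<dots> = inner w (M *v u)" by (simp add: inner_commute)
      finally have e1: "inner u (M *v w) = inner w w" using wMu by simp
      have e2: "inner w (M *v u) = inner w w" by (rule wMu)
      have "inner (u + t *\<^sub>R w) (M *v (u + t *\<^sub>R w)) = inner u (M *v u) + t * inner u (M *v w) + t * inner w (M *v u) + t * t * inner w (M *v w)"
        by (simp add: matrix_vector_right_distrib matrix_vector_mult_scaleR inner_add_left inner_add_right algebra_simps)
      thus ?thesis using e1 e2 by (simp add: l_def power2_eq_square algebra_simps)
    qed
    have eq2: "inner (u + t *\<^sub>R w) (u + t *\<^sub>R w) = 1 + t^2 * inner w w"
      using uu wu by (simp add: inner_add_left inner_add_right inner_commute[of u w] power2_eq_square algebra_simps)
    have h1: "l + 2 * t * inner w w + t^2 * inner w (M *v w) \<le> l * (1 + t^2 * inner w w)"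
      using le by (simp only: eq1 eq2)
    have h2: "2 * t * inner w w + t^2 * C = (l + 2 * t * inner w w + t^2 * inner w (M *v w)) - l * (1 + t^2 * inner w w)"
      unfolding C_def by (rule ring_aux)
    show ?thesis unfolding h2 using h1 by (simp only: diff_le_0_iff_le)
  qed
  have "inner w w = 0"
  proof (rule ccontr)
    assume "inner w w \<noteq> 0"
    hence p: "inner w w > 0" by (simp add: order_less_le)
    define t where "t = inner w w / (\<bar>C\<bar> + 1)"
    have tp: "t > 0" unfolding t_def using p by (simp add: add_pos_nonneg)
    have e: "t * (\<bar>C\<bar> + 1) = inner w w" unfolding t_def by (simp add: add_pos_nonneg)
    hence e2: "t * \<bar>C\<bar> + t = inner w w" by (simp add: distrib_left)
    have "t * (- \<bar>C\<bar>) \<le> t * C" using tp by (intro mult_left_mono) auto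
    hence "- (t * \<bar>C\<bar>) \<le> t * C" by simp
    hence "2 * inner w w + t * C > 0" using e2 tp p by linarith
    hence "t * (2 * inner w w + t * C) > 0" using tp by (rule mult_pos_pos[rotated])
    moreover have "t * (2 * inner w w + t * C) = 2 * t * inner w w + t^2 * C" by (rule ring_aux2)
    ultimately show False using key[of t] by linarith
  qed
  hence "w = 0" by simp
  hence "M *v u = l *\<^sub>R u" unfolding w_def by simp
  thus ?thesis using uS nu by blast
qed

lemma spectral_basis:
  fixes M :: "real^'m^'m"
  assumes sym: "transpose M = M"
  shows "\<exists>B. finite B \<and> card B = CARD('m) \<and> (\<forall>b\<in>B. norm b = 1 \<and> (\<exists>e. M *v b = e *\<^sub>R b))
          \<and> (\<forall>b\<in>B. \<forall>c\<in>B. b \<noteq> c \<longrightarrow> inner b c = 0)"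
proof -
  have "k \<le> CARD('m) \<Longrightarrow> \<exists>B. finite B \<and> card B = k \<and> (\<forall>b\<in>B. norm b = 1 \<and> (\<exists>e. M *v b = e *\<^sub>R b))
          \<and> (\<forall>b\<in>B. \<forall>c\<in>B. b \<noteq> c \<longrightarrow> inner b c = 0)" for k
  proof (induction k)
    case 0
    show ?case by (rule exI[of _ "{}"]) simp
  next
    case (Suc k)
    then obtain B where fB: "finite B" and cB: "card B = k"
      and eB: "\<forall>b\<in>B. norm b = 1 \<and> (\<exists>e. M *v b = e *\<^sub>R b)"
      and oB: "\<forall>b\<in>B. \<forall>c\<in>B. b \<noteq> c \<longrightarrow> inner b c = 0" by auto
    define S where "S = {y. \<forall>x \<in> B. Linear_Algebra.orthogonal x y}"
    have sS: "subspace S" unfolding S_def by (rule subspace_orthogonal_to_vectors)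
    have "dim B < DIM(real^'m)" using dim_le_card'[OF fB] cB Suc.prems by simp
    then obtain x0 where x0: "x0 \<noteq> 0" "\<And>y. y \<in> span B \<Longrightarrow> Linear_Algebra.orthogonal x0 y"
      by (rule orthogonal_to_subspace_exists) auto
    have x0S: "x0 \<in> S" unfolding S_def using x0(2) span_base orthogonal_commute by blast
    have inv: "M *v y \<in> S" if "y \<in> S" for y
    proof -
      have "Linear_Algebra.orthogonal x (M *v y)" if xB: "x \<in> B" for x
      proof -
        obtain e where ex: "M *v x = e *\<^sub>R x" using eB xB by blast
        have "inner x (M *v y) = inner (M *v x) y" by (rule sym_inner[OF sym])
        also have "\<dots> = e * inner x y" using ex by simp
        also have "inner x y = 0" using \<open>y \<in> S\<close> xB unfolding S_def real_inner_class.orthogonal_def by blast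
        finally show ?thesis unfolding real_inner_class.orthogonal_def by simp
      qed
      thus ?thesis unfolding S_def by blast
    qed
    obtain u where uS: "u \<in> S" and nu: "norm u = 1" and eu: "\<exists>e. M *v u = e *\<^sub>R u"
      using eig_in_subspace[OF sym sS inv x0S x0(1)] by blast
    have uB: "u \<notin> B"
    proof
      assume "u \<in> B"
      hence "inner u u = 0" using uS unfolding S_def real_inner_class.orthogonal_def by blast
      thus False using nu by simp
    qed
    have ou: "inner b u = 0" if "b \<in> B" for b using uS that unfolding S_def real_inner_class.orthogonal_def by blast
    show ?case
    proof (rule exI[of _ "insert u B"], intro conjI)
      show "finite (insert u B)" using fB by simp
      show "card (insert u B) = Suc k" using fB uB cB by simp
      show "\<forall>b\<in>insert u B. norm b = 1 \<and> (\<exists>e. M *v b = e *\<^sub>R b)" using eB nu eu by blast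
      show "\<forall>b\<in>insert u B. \<forall>c\<in>insert u B. b \<noteq> c \<longrightarrow> inner b c = 0"
        using oB ou by (auto simp: inner_commute)
    qed
  qed
  thus ?thesis by blast
qed

lemma spectral_nat:
  fixes A :: "nat \<Rightarrow> nat \<Rightarrow> real" and N :: nat
  assumes card: "CARD('m::finite) = N" and sym: "\<And>i j. i < N \<Longrightarrow> j < N \<Longrightarrow> A i j = A j i"
  shows "\<exists>u e. (\<forall>i<N. \<forall>j<N. (\<Sum>l<N. u i l * u j l) = (if i = j then 1 else 0)) \<and>
               (\<forall>i<N. \<forall>j<N. (\<Sum>l<N. A j l * u i l) = e i * u i j)"
proof -
  obtain g where g: "bij_betw g {..<N} (UNIV :: 'm set)"
    using ex_bij_betw_nat_finite[of "UNIV :: 'm set"] card by (auto simp: atLeast0LessThan)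
  define gi where "gi = inv_into {..<N} g"
  have gig: "gi (g l) = l" if "l < N" for l
    unfolding gi_def using g that by (simp add: bij_betw_def inv_into_f_f)
  define M :: "real^'m^'m" where "M = (\<chi> a b. A (gi a) (gi b))"
  have giN: "gi a < N" for a
  proof -
    have "a \<in> g ` {..<N}" using g by (auto simp: bij_betw_def)
    then obtain l where "l < N" "a = g l" by auto
    thus ?thesis using gig by simp
  qed
  have symM: "transpose M = M"
    unfolding M_def transpose_def by (simp add: vec_eq_iff sym[OF giN giN])
  obtain B where fB: "finite B" and cB: "card B = CARD('m)"
      and eB: "\<forall>b\<in>B. norm b = 1 \<and> (\<exists>e. M *v b = e *\<^sub>R b)"
      and oB: "\<forall>b\<in>B. \<forall>c\<in>B. b \<noteq> c \<longrightarrow> inner b c = 0"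
    using spectral_basis[OF symM] by blast
  obtain f where f: "bij_betw f {..<N} B"
    using ex_bij_betw_nat_finite[OF fB] cB card by (auto simp: atLeast0LessThan)
  define u where "u i l = f i $ g l" for i l
  define e where "e i = (SOME e. M *v f i = e *\<^sub>R f i)" for i
  have fiB: "f i \<in> B" if "i < N" for i using f that by (auto simp: bij_betw_def)
  have ei: "M *v f i = e i *\<^sub>R f i" if "i < N" for i
    unfolding e_def using eB fiB[OF that] by (metis (mono_tags, lifting) someI_ex)
  have reidx: "(\<Sum>l<N. h (g l)) = (\<Sum>a\<in>UNIV. h a)" for h :: "'m \<Rightarrow> real"
    by (rule sum.reindex_bij_betw[OF g])
  have orth: "(\<Sum>l<N. u i l * u j l) = (if i = j then 1 else 0)" if "i < N" "j < N" for i j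
  proof -
    have "(\<Sum>l<N. u i l * u j l) = inner (f i) (f j)"
      unfolding u_def inner_vec_def using reidx[of "\<lambda>a. f i $ a * f j $ a"] by simp
    also have "\<dots> = (if i = j then 1 else 0)"
    proof (cases "i = j")
      case True
      have "norm (f i) = 1" using eB fiB[OF that(1)] by blast
      hence "inner (f i) (f i) = 1" by (simp add: dot_square_norm)
      thus ?thesis using True by simp
    next
      case False
      have "f i \<noteq> f j" using f that False by (auto simp: bij_betw_def inj_on_def)
      thus ?thesis using oB fiB that False by auto
    qed
    finally show ?thesis .
  qed
  have eig: "(\<Sum>l<N. A j l * u i l) = e i * u i j" if "i < N" "j < N" for i j
  proof -
    have "(\<Sum>l<N. A j l * u i l) = (\<Sum>l<N. M $ g j $ g l * f i $ g l)"
      unfolding u_def M_def using gig that(2) by (intro sum.cong) auto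
    also have "\<dots> = (\<Sum>b\<in>UNIV. M $ g j $ b * f i $ b)"
      using reidx[of "\<lambda>b. M $ g j $ b * f i $ b"] by simp
    also have "\<dots> = (M *v f i) $ g j" by (simp add: matrix_vector_mult_def)
    also have "\<dots> = e i * u i j" using ei[OF that(1)] unfolding u_def by simp
    finally show ?thesis .
  qed
  show ?thesis using orth eig by blast
qed

lemma char_poly_from_eig:
  fixes A :: "real mat"
  assumes A: "A \<in> carrier_mat N N"
    and orth: "\<And>i j. i<N \<Longrightarrow> j<N \<Longrightarrow> (\<Sum>l<N. u i l * u j l) = (if i = j then 1 else 0)"
    and eig: "\<And>i j. i<N \<Longrightarrow> j<N \<Longrightarrow> (\<Sum>l<N. A $$ (j,l) * u i l) = e i * u i j"
  shows "char_poly A = (\<Prod>a\<leftarrow>map e [0..<N]. [:- a, 1:])"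
    and "\<And>a b. a<N \<Longrightarrow> b<N \<Longrightarrow> (\<Sum>i<N. u i a * u i b) = (if a = b then 1 else 0)"
proof -
  define U :: "real mat" where "U = mat N N (\<lambda>(l,i). u i l)"
  define D :: "real mat" where "D = mat N N (\<lambda>(i,j). if i = j then e i else 0)"
  have U: "U \<in> carrier_mat N N" and UT: "transpose_mat U \<in> carrier_mat N N"
    and D: "D \<in> carrier_mat N N" unfolding U_def D_def by auto
  have UTU: "transpose_mat U * U = 1\<^sub>m N"
  proof (rule eq_matI)
    fix i j assume ij: "i < dim_row (1\<^sub>m N)" "j < dim_col (1\<^sub>m N)"
    hence "(transpose_mat U * U) $$ (i,j) = (\<Sum>l<N. u i l * u j l)"
      unfolding U_def by (simp add: scalar_prod_def atLeast0LessThan)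
    also have "\<dots> = 1\<^sub>m N $$ (i,j)" using orth ij by simp
    finally show "(transpose_mat U * U) $$ (i,j) = 1\<^sub>m N $$ (i,j)" .
  qed (auto simp: U_def)
  have UUT: "U * transpose_mat U = 1\<^sub>m N"
    by (rule mat_mult_left_right_inverse[OF UT U UTU])
  have AU: "A * U = U * D"
  proof (rule eq_matI)
    fix j i assume ji: "j < dim_row (U * D)" "i < dim_col (U * D)"
    hence jN: "j < N" and iN: "i < N" using U D by auto
    have "(A * U) $$ (j,i) = (\<Sum>l<N. A $$ (j,l) * u i l)"
      using A jN iN unfolding U_def by (simp add: scalar_prod_def atLeast0LessThan)
    also have "\<dots> = e i * u i j" by (rule eig[OF iN jN])
    also have "\<dots> = (\<Sum>l<N. u l j * (if l = i then e l else 0))"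
      using iN by (simp add: if_distrib mult.commute cong: if_cong)
    also have "\<dots> = (U * D) $$ (j,i)"
      using jN iN unfolding U_def D_def by (simp add: scalar_prod_def atLeast0LessThan)
    finally show "(A * U) $$ (j,i) = (U * D) $$ (j,i)" .
  qed (use A U D in auto)
  have "A = A * (U * transpose_mat U)" using A by (simp add: UUT)
  also have "\<dots> = (A * U) * transpose_mat U" using A U UT by (simp add: assoc_mult_mat)
  also have "\<dots> = U * D * transpose_mat U" by (simp add: AU)
  finally have AUDU: "A = U * D * transpose_mat U" .
  have "similar_mat_wit A D U (transpose_mat U)"
    unfolding similar_mat_wit_def Let_def using A U D UT UUT UTU AUDU by auto
  hence "similar_mat A D" unfolding similar_mat_def by blast
  hence "char_poly A = char_poly D" by (rule char_poly_similar)
  also have "\<dots> = (\<Prod>a\<leftarrow>diag_mat D. [:- a, 1:])"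
    by (rule char_poly_upper_triangular[OF D]) (auto simp: upper_triangular_def D_def)
  also have "diag_mat D = map e [0..<N]"
    unfolding diag_mat_def D_def by (intro nth_equalityI) auto
  finally show "char_poly A = (\<Prod>a\<leftarrow>map e [0..<N]. [:- a, 1:])" .
  fix a b assume ab: "a < N" "b < N"
  have "(\<Sum>i<N. u i a * u i b) = (U * transpose_mat U) $$ (a,b)"
    using ab unfolding U_def by (simp add: scalar_prod_def atLeast0LessThan)
  also have "\<dots> = (if a = b then 1 else 0)" using ab by (simp add: UUT)
  finally show "(\<Sum>i<N. u i a * u i b) = (if a = b then 1 else 0)" .
qed

lemma proots_linprod: "proots (\<Prod>a\<leftarrow>xs. [:- a, 1:]) = mset (xs :: real list)"
proof (induction xs)
  case Nil then show ?case by simp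
next
  case (Cons a xs)
  have nz1: "[:- a, 1:] \<noteq> 0" by simp
  have nz2: "(\<Prod>a\<leftarrow>xs. [:- a, 1:]) \<noteq> 0" by (auto simp: prod_list_zero_iff)
  have "proots (\<Prod>a\<leftarrow>a # xs. [:- a, 1:]) = proots ([:- a, 1:] * (\<Prod>a\<leftarrow>xs. [:- a, 1:]))"
    by (simp only: list.map prod_list.Cons)
  also have "\<dots> = proots [:- a, 1:] + proots (\<Prod>a\<leftarrow>xs. [:- a, 1:])"
    by (rule proots_mult[OF nz1 nz2])
  also have "proots [:- a, 1:] = {#a#}" using proots_linear_factor[of "- a"] by simp
  also have "{#a#} + proots (\<Prod>a\<leftarrow>xs. [:- a, 1:]) = mset (a # xs)" unfolding Cons.IH by simp
  finally show ?case .
qed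

lemma count_filter_perm:
  assumes "mset L = mset xs"
  shows "card {i. i < length L \<and> P (L ! i)} = card {i. i < length xs \<and> P (xs ! i)}"
proof -
  have "length (filter P L) = length (filter P xs)"
    by (metis assms mset_filter size_mset)
  thus ?thesis by (simp add: length_filter_conv_card)
qed

lemma second_largest:
  fixes e :: "nat \<Rightarrow> real"
  assumes N: "2 \<le> N"
    and gt: "card {i. i < N \<and> e i > m} \<le> 1"
    and ge: "2 \<le> card {i. i < N \<and> e i \<ge> m}"
  shows "rev (sort (map e [0..<N])) ! 1 = m"
proof -
  define xs where "xs = map e [0..<N]"
  define L where "L = rev (sort xs)"
  have mL: "mset L = mset xs" unfolding L_def by simp
  have lL: "length L = N" unfolding L_def xs_def by simp
  have cnt: "card {i. i < N \<and> P (L ! i)} = card {i. i < N \<and> P (e i)}" for P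
  proof -
    have "card {i. i < length L \<and> P (L ! i)} = card {i. i < length xs \<and> P (xs ! i)}"
      by (rule count_filter_perm[OF mL])
    moreover have "{i. i < length xs \<and> P (xs ! i)} = {i. i < N \<and> P (e i)}"
      unfolding xs_def by auto
    ultimately show ?thesis using lL by simp
  qed
  have mono: "L ! j \<le> L ! i" if "i \<le> j" "j < N" for i j
  proof -
    have s: "sorted (sort xs)" by simp
    have ls: "length (sort xs) = N" unfolding xs_def by simp
    have "L ! i = sort xs ! (N - Suc i)" "L ! j = sort xs ! (N - Suc j)"
      unfolding L_def using that ls by (auto simp: rev_nth)
    moreover have "sort xs ! (N - Suc j) \<le> sort xs ! (N - Suc i)"
      using sorted_nth_mono[OF s, of "N - Suc j" "N - Suc i"] that ls by auto
    ultimately show ?thesis by simp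
  qed
  have a: "L ! 1 \<ge> m"
  proof (rule ccontr)
    assume "\<not> L ! 1 \<ge> m"
    hence h: "L ! 1 < m" by simp
    have sub: "{i. i < N \<and> L ! i \<ge> m} \<subseteq> {0}"
    proof
      fix i assume "i \<in> {i. i < N \<and> L ! i \<ge> m}"
      hence i: "i < N" "L ! i \<ge> m" by auto
      show "i \<in> {0}"
      proof (rule ccontr)
        assume "i \<notin> {0}"
        hence "1 \<le> i" by simp
        hence "L ! i \<le> L ! 1" using mono i(1) by blast
        thus False using h i(2) by simp
      qed
    qed
    have "card {i. i < N \<and> L ! i \<ge> m} \<le> card {0::nat}" by (rule card_mono[OF _ sub]) simp
    hence "card {i. i < N \<and> L ! i \<ge> m} \<le> 1" by simp
    thus False using ge cnt[of "\<lambda>x. x \<ge> m"] by simp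
  qed
  have b: "L ! 1 \<le> m"
  proof (rule ccontr)
    assume "\<not> L ! 1 \<le> m"
    hence h: "L ! 1 > m" by simp
    have "L ! 0 > m" using mono[of 0 1] N h by simp
    hence "{0, 1} \<subseteq> {i. i < N \<and> L ! i > m}" using h N by auto
    hence "card {0::nat, 1} \<le> card {i. i < N \<and> L ! i > m}" by (intro card_mono) auto
    thus False using gt cnt[of "\<lambda>x. x > m"] by simp
  qed
  show ?thesis using a b unfolding L_def xs_def by simp
qed

lemma kernel_vec_gen:
  fixes q :: "nat \<Rightarrow> real^'n" and w :: "nat \<Rightarrow> real"
  assumes inj: "inj_on q {..<N}" and N: "N = CARD('n) + 2"
  shows "\<exists>x. (\<exists>l<N. x l \<noteq> 0) \<and> (\<Sum>l<N. x l *\<^sub>R q l) = 0 \<and> (\<Sum>l<N. x l * w l) = 0"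
proof -
  define h where "h l = (q l, w l)" for l
  have injh: "inj_on h {..<N}" using inj unfolding h_def inj_on_def by auto
  define T where "T = h ` {..<N}"
  have cT: "card T = N" unfolding T_def using card_image[OF injh] by simp
  have fT: "finite T" unfolding T_def by simp
  have "\<not> independent T"
  proof
    assume "independent T"
    from independent_bound[OF this] have "card T \<le> DIM((real^'n) \<times> real)" by simp
    thus False using cT N by simp
  qed
  then obtain v where v1: "\<exists>t\<in>T. v t \<noteq> 0" and v2: "(\<Sum>t\<in>T. v t *\<^sub>R t) = 0"
    using real_vector.dependent_finite[OF fT] by blast
  define x where "x l = v (h l)" for l
  have "(\<Sum>t\<in>T. v t *\<^sub>R t) = (\<Sum>l<N. x l *\<^sub>R h l)"
    by (rule sum.reindex_cong[OF injh]) (simp_all add: T_def x_def)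
  hence s: "(\<Sum>l<N. x l *\<^sub>R h l) = 0" using v2 by simp
  have "fst (\<Sum>l<N. x l *\<^sub>R h l) = (\<Sum>l<N. x l *\<^sub>R q l)"
    by (simp add: fst_sum h_def)
  hence s1: "(\<Sum>l<N. x l *\<^sub>R q l) = 0" using s by simp
  have "snd (\<Sum>l<N. x l *\<^sub>R h l) = (\<Sum>l<N. x l * w l)"
    by (simp add: snd_sum h_def)
  hence s2: "(\<Sum>l<N. x l * w l) = 0" using s by simp
  have "\<exists>l<N. x l \<noteq> 0" using v1 unfolding T_def x_def by auto
  thus ?thesis using s1 s2 by blast
qed



lemma gram_form:
  fixes q :: "nat \<Rightarrow> real^'n" and x :: "nat \<Rightarrow> real"
  assumes G: "\<And>i j. i<N \<Longrightarrow> j<N \<Longrightarrow> inner (q i) (q j) = cc + (if i = j then h else 0) - s * A i j"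
  shows "(norm (\<Sum>l<N. x l *\<^sub>R q l))^2 = cc * (\<Sum>l<N. x l)^2 + h * (\<Sum>l<N. x l * x l)
           - s * (\<Sum>j<N. \<Sum>l<N. x j * A j l * x l)"
proof -
  have "(norm (\<Sum>l<N. x l *\<^sub>R q l))^2 = inner (\<Sum>j<N. x j *\<^sub>R q j) (\<Sum>l<N. x l *\<^sub>R q l)"
    by (simp add: dot_square_norm)
  also have "\<dots> = (\<Sum>j<N. x j * inner (q j) (\<Sum>l<N. x l *\<^sub>R q l))"
    by (simp add: inner_sum_left)
  also have "\<dots> = (\<Sum>j<N. \<Sum>l<N. x j * x l * inner (q j) (q l))"
    by (intro sum.cong refl) (simp add: inner_sum_right sum_distrib_left mult.assoc)
  also have "\<dots> = (\<Sum>j<N. \<Sum>l<N. cc * (x j * x l) + (if j = l then h * (x j * x l) else 0) - s * (x j * A j l * x l))"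
    by (intro sum.cong refl) (simp add: G algebra_simps)
  also have "\<dots> = cc * (\<Sum>j<N. \<Sum>l<N. x j * x l) + (\<Sum>j<N. \<Sum>l<N. (if j = l then h * (x j * x l) else 0))
                  - s * (\<Sum>j<N. \<Sum>l<N. x j * A j l * x l)"
    by (simp add: sum.distrib sum_subtractf sum_distrib_left)
  also have "(\<Sum>j<N. \<Sum>l<N. x j * x l) = (\<Sum>l<N. x l)^2"
    by (simp add: power2_eq_square sum_product)
  also have "(\<Sum>j<N. \<Sum>l<N. (if j = l then h * (x j * x l) else 0)) = h * (\<Sum>l<N. x l * x l)"
    by (simp add: sum_distrib_left)
  finally show ?thesis .
qed

lemma spec_quad:
  fixes A :: "nat \<Rightarrow> nat \<Rightarrow> real"
  assumes orth: "\<And>i j. i<N \<Longrightarrow> j<N \<Longrightarrow> (\<Sum>l<N. u i l * u j l) = (if i = j then 1 else 0)"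
    and compl: "\<And>a b. a<N \<Longrightarrow> b<N \<Longrightarrow> (\<Sum>i<N. u i a * u i b) = (if a = b then 1 else 0)"
    and eig: "\<And>i j. i<N \<Longrightarrow> j<N \<Longrightarrow> (\<Sum>l<N. A j l * u i l) = e i * u i j"
  shows "(\<Sum>j<N. \<Sum>l<N. x j * A j l * x l) = (\<Sum>i<N. e i * (\<Sum>l<N. x l * u i l)^2)"
    and "(\<Sum>l<N. x l * x l) = (\<Sum>i<N. (\<Sum>l<N. x l * u i l)^2)"
    and "(\<forall>i<N. (\<Sum>l<N. x l * u i l) = 0) \<Longrightarrow> l < N \<Longrightarrow> x l = 0"
proof -
  define c where "c i = (\<Sum>l<N. x l * u i l)" for i
  have xe: "x l = (\<Sum>i<N. c i * u i l)" if "l < N" for l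
  proof -
    have "(\<Sum>i<N. c i * u i l) = (\<Sum>i<N. \<Sum>m<N. x m * (u i m * u i l))"
      unfolding c_def by (simp add: sum_distrib_right mult.assoc)
    also have "\<dots> = (\<Sum>m<N. x m * (\<Sum>i<N. u i m * u i l))"
      by (subst sum.swap) (simp add: sum_distrib_left)
    also have "\<dots> = (\<Sum>m<N. (if m = l then x m else 0))"
      by (intro sum.cong refl) (simp add: compl that)
    also have "\<dots> = x l" using that by simp
    finally show ?thesis by simp
  qed
  have Ax: "(\<Sum>l<N. A j l * x l) = (\<Sum>i<N. c i * e i * u i j)" if "j < N" for j
  proof -
    have "(\<Sum>l<N. A j l * x l) = (\<Sum>l<N. \<Sum>i<N. c i * (A j l * u i l))"
      by (intro sum.cong refl) (simp add: xe sum_distrib_left algebra_simps)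
    also have "\<dots> = (\<Sum>i<N. c i * (\<Sum>l<N. A j l * u i l))"
      by (subst sum.swap) (simp add: sum_distrib_left)
    also have "\<dots> = (\<Sum>i<N. c i * e i * u i j)"
      by (intro sum.cong refl) (simp add: eig that)
    finally show ?thesis .
  qed
  have "(\<Sum>j<N. \<Sum>l<N. x j * A j l * x l) = (\<Sum>j<N. x j * (\<Sum>l<N. A j l * x l))"
    by (simp add: sum_distrib_left mult.assoc)
  also have "\<dots> = (\<Sum>j<N. \<Sum>i<N. c i * e i * (x j * u i j))"
  proof (intro sum.cong refl)
    fix j assume "j \<in> {..<N}"
    hence jN: "j < N" by simp
    show "x j * (\<Sum>l<N. A j l * x l) = (\<Sum>i<N. c i * e i * (x j * u i j))"
      unfolding Ax[OF jN] sum_distrib_left by (simp add: algebra_simps)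
  qed
  also have "\<dots> = (\<Sum>i<N. c i * e i * c i)"
    by (subst sum.swap) (simp add: c_def sum_distrib_left)
  also have "\<dots> = (\<Sum>i<N. e i * (\<Sum>l<N. x l * u i l)^2)"
    unfolding c_def by (simp add: power2_eq_square algebra_simps)
  finally show "(\<Sum>j<N. \<Sum>l<N. x j * A j l * x l) = (\<Sum>i<N. e i * (\<Sum>l<N. x l * u i l)^2)" .
  have "(\<Sum>l<N. x l * x l) = (\<Sum>l<N. \<Sum>i<N. c i * (x l * u i l))"
  proof (intro sum.cong refl)
    fix l assume "l \<in> {..<N}"
    hence lN: "l < N" by simp
    show "x l * x l = (\<Sum>i<N. c i * (x l * u i l))"
      by (subst (2) xe[OF lN]) (simp add: sum_distrib_left algebra_simps)
  qed
  also have "\<dots> = (\<Sum>i<N. c i * c i)"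
    by (subst sum.swap) (simp add: c_def sum_distrib_left)
  also have "\<dots> = (\<Sum>i<N. (\<Sum>l<N. x l * u i l)^2)"
    unfolding c_def by (simp add: power2_eq_square)
  finally show "(\<Sum>l<N. x l * x l) = (\<Sum>i<N. (\<Sum>l<N. x l * u i l)^2)" .
  assume z: "\<forall>i<N. (\<Sum>l<N. x l * u i l) = 0" and l: "l < N"
  show "x l = 0" using xe[OF l] z unfolding c_def by simp
qed

lemma synth_coef:
  fixes N :: nat
  assumes orth: "\<And>i j. i<N \<Longrightarrow> j<N \<Longrightarrow> (\<Sum>l<N. u i l * u j l) = (if i = j then 1 else (0::real))"
    and j: "j < N"
  shows "(\<Sum>l<N. (\<Sum>i<N. g i * u i l) * u j l) = g j"
proof -
  have "(\<Sum>l<N. (\<Sum>i<N. g i * u i l) * u j l) = (\<Sum>l<N. \<Sum>i<N. g i * (u i l * u j l))"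
    by (simp add: sum_distrib_right mult.assoc)
  also have "\<dots> = (\<Sum>i<N. g i * (\<Sum>l<N. u i l * u j l))"
    by (subst sum.swap) (simp add: sum_distrib_left)
  also have "\<dots> = (\<Sum>i<N. if i = j then g i else 0)"
    by (intro sum.cong refl) (simp add: orth j)
  also have "\<dots> = g j" using j by (auto simp: sum.delta)
  finally show ?thesis .
qed



lemma neg_core:
  fixes q :: "nat \<Rightarrow> real^'n" and N :: nat and y :: "nat \<Rightarrow> real"
  assumes neg: "\<And>i j. i<N \<Longrightarrow> j<N \<Longrightarrow> i \<noteq> j \<Longrightarrow> inner (q i) (q j) < 0"
    and N0: "0 < N" and y0: "y 0 = 0" and pos: "\<exists>l<N. y l > 0" and ker: "(\<Sum>l<N. y l *\<^sub>R q l) = 0"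
  shows False
proof -
  define P where "P = {l. l < N \<and> y l > 0}"
  define Nn where "Nn = {l. l < N \<and> y l < 0}"
  have fP: "finite P" and fN: "finite Nn" unfolding P_def Nn_def by auto
  have disj: "P \<inter> Nn = {}" unfolding P_def Nn_def by auto
  have "(\<Sum>l<N. y l *\<^sub>R q l) = (\<Sum>l\<in>P \<union> Nn. y l *\<^sub>R q l)"
    by (rule sum.mono_neutral_right) (auto simp: P_def Nn_def linorder_neq_iff)
  also have "\<dots> = (\<Sum>l\<in>P. y l *\<^sub>R q l) + (\<Sum>l\<in>Nn. y l *\<^sub>R q l)"
    by (rule sum.union_disjoint[OF fP fN disj])
  finally have "(\<Sum>l\<in>P. y l *\<^sub>R q l) + (\<Sum>l\<in>Nn. y l *\<^sub>R q l) = 0" using ker by simp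
  hence vN: "(\<Sum>l\<in>P. y l *\<^sub>R q l) = - (\<Sum>l\<in>Nn. y l *\<^sub>R q l)"
    by (simp add: eq_neg_iff_add_eq_0)
  define v where "v = (\<Sum>l\<in>P. y l *\<^sub>R q l)"
  have "inner v v = inner (\<Sum>i\<in>P. y i *\<^sub>R q i) (\<Sum>j\<in>Nn. (- y j) *\<^sub>R q j)"
    unfolding v_def using vN by (simp add: sum_negf)
  also have "\<dots> = (\<Sum>i\<in>P. y i * inner (q i) (\<Sum>j\<in>Nn. (- y j) *\<^sub>R q j))"
    by (simp add: inner_sum_left)
  also have "\<dots> = (\<Sum>i\<in>P. \<Sum>j\<in>Nn. y i * (- y j) * inner (q i) (q j))"
    by (intro sum.cong refl) (simp add: inner_sum_right sum_distrib_left mult.assoc)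
  also have "\<dots> \<le> 0"
  proof (intro sum_nonpos)
    fix i j assume i: "i \<in> P" and j: "j \<in> Nn"
    have "i \<noteq> j" using i j disj by auto
    hence B: "inner (q i) (q j) < 0" using neg i j unfolding P_def Nn_def by auto
    have "y i > 0" "- y j > 0" using i j unfolding P_def Nn_def by auto
    hence A: "y i * (- y j) > 0" by (rule mult_pos_pos)
    show "y i * (- y j) * inner (q i) (q j) \<le> 0"
      by (rule less_imp_le[OF mult_pos_neg[OF A B]])
  qed
  finally have "inner v v \<le> 0" .
  hence "inner v v = 0" using inner_ge_zero[of v] by linarith
  hence v0: "v = 0" by (simp only: inner_eq_zero_iff)
  have "inner (q 0) v = (\<Sum>i\<in>P. y i * inner (q 0) (q i))"
    unfolding v_def by (simp add: inner_sum_right)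
  also have "\<dots> < 0"
  proof -
    have "0 < (\<Sum>i\<in>P. - (y i * inner (q 0) (q i)))"
    proof (rule sum_pos[OF fP])
      show "P \<noteq> {}" using pos unfolding P_def by auto
      fix i assume i: "i \<in> P"
      have "i \<noteq> 0"
      proof
        assume "i = 0"
        hence "y i = 0" using y0 by simp
        thus False using i unfolding P_def by simp
      qed
      hence "inner (q 0) (q i) < 0" using neg[of 0 i] i N0 unfolding P_def by auto
      moreover have "y i > 0" using i unfolding P_def by auto
      ultimately show "0 < - (y i * inner (q 0) (q i))"
        by (simp add: mult_pos_neg)
    qed
    thus ?thesis by (simp add: sum_negf)
  qed
  finally show False using v0 by simp
qed

lemma no_neg_config:
  fixes q :: "nat \<Rightarrow> real^'n" and N :: nat
  assumes N: "N = CARD('n) + 2" and inj: "inj_on q {..<N}"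
    and neg: "\<And>i j. i<N \<Longrightarrow> j<N \<Longrightarrow> i \<noteq> j \<Longrightarrow> inner (q i) (q j) < 0"
  shows False
proof -
  have N0: "0 < N" using N by simp
  obtain x where x1: "\<exists>l<N. x l \<noteq> 0" and x2: "(\<Sum>l<N. x l *\<^sub>R q l) = 0"
    and x3: "(\<Sum>l<N. x l * (if l = 0 then 1 else 0)) = 0"
    using kernel_vec_gen[OF inj N, of "\<lambda>l. if l = 0 then 1 else 0"] by blast
  have "(\<Sum>l<N. x l * (if l = 0 then 1 else 0)) = x 0" using N0 by (simp add: if_distrib cong: if_cong)
  hence x0: "x 0 = 0" using x3 by simp
  show False
  proof (cases "\<exists>l<N. x l > 0")
    case True
    show False by (rule neg_core[OF neg N0 x0 True x2])
  next
    case False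
    then obtain l where l: "l < N" "x l < 0" using x1 by (auto simp: linorder_neq_iff)
    have p: "\<exists>l<N. (- x l) > 0" using l by auto
    have k: "(\<Sum>l<N. (- x l) *\<^sub>R q l) = 0" using x2 by (simp add: sum_negf)
    have y0: "- x 0 = 0" using x0 by simp
    show False by (rule neg_core[where y="\<lambda>l. - x l", OF neg N0 y0 p k])
  qed
qed


lemma two_elems:
  assumes "2 \<le> card S"
  shows "\<exists>a\<in>S. \<exists>b\<in>S. a \<noteq> b"
proof (rule ccontr)
  assume "\<not> ?thesis"
  hence "\<forall>a\<in>S. \<forall>b\<in>S. a = b" by blast
  hence "card S \<le> 1" by (cases "finite S") (auto simp: card_le_Suc0_iff_eq)
  thus False using assms by simp
qed

lemma one_elem:
  assumes "card S \<le> 1" and "finite S"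
  shows "\<exists>a. \<forall>i\<in>S. i = a"
proof -
  have "\<forall>x\<in>S. \<forall>y\<in>S. x = y" using assms card_le_Suc0_iff_eq by auto
  thus ?thesis by blast
qed

theorem corollary4p3:
  fixes E :: "nat \<Rightarrow> nat \<Rightarrow> bool" and k :: real
  assumes "simple_graph {0..<CARD('n::finite) + 2} E"
    and "has_spherical_rep TYPE('n) {0..<CARD('n) + 2} E k"
  shows "k = sqrt (1 / (adj_eigenvalues (CARD('n) + 2) E ! 1) + 1)
         \<and> adj_eigenvalues (CARD('n) + 2) E ! 1 > 0"
proof -
  note sg = assms(1) and rep = assms(2)
  define N where "N = CARD('n) + 2"
  have VN: "{0..<N} = {..<N}" by (simp add: atLeast0LessThan)
  have N2: "2 \<le> N" unfolding N_def by simp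
  obtain p :: "nat \<Rightarrow> real^'n" where inj: "inj_on p {..<N}" and two: "two_distance_set (p ` {..<N})"
      and ratio: "distance_ratio (p ` {..<N}) = k" and sph: "\<exists>c r. p ` {..<N} \<subseteq> sphere c r"
      and Eiff: "\<forall>i\<in>{..<N}. \<forall>j\<in>{..<N}. E i j \<longleftrightarrow> associated_graph (p ` {..<N}) (p i) (p j)"
    using rep unfolding has_spherical_rep_def N_def[symmetric] VN by blast
  obtain c r where sph': "p ` {..<N} \<subseteq> sphere c r" using sph by blast
  have Esym: "E i j \<Longrightarrow> E j i" and Eirr: "E i j \<Longrightarrow> i \<noteq> j" for i j
    using sg unfolding simple_graph_def by auto
  define D where "D = dist_set (p ` {..<N})"
  have cD: "card D = 2" using two unfolding two_distance_set_def D_def by simp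
  then obtain a1 a2 where D12: "D = {a1, a2}" and a12: "a1 \<noteq> a2" by (auto simp: card_2_iff)
  have Dpos: "d > 0" if "d \<in> D" for d
    using that unfolding D_def dist_set_def by auto
  define al where "al = Max D"
  define b where "b = Min D"
  have al_def2: "al = max a1 a2" unfolding al_def D12 by simp
  have b_def2: "b = min a1 a2" unfolding b_def D12 by simp
  have bpos: "b > 0" using Dpos D12 b_def2 by (auto simp: min_def)
  have alb: "al > b" using a12 al_def2 b_def2 by (auto simp: min_def max_def)
  have k_def2: "k = al / b" using ratio unfolding distance_ratio_def D_def[symmetric] al_def b_def by simp
  have k1: "k > 1" using alb bpos k_def2 by simp
  have alk: "al = k * b" using bpos k_def2 by simp
  have distE: "dist (p i) (p j) = (if E i j then k * b else b)" if ij: "i < N" "j < N" "i \<noteq> j" for i j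
  proof -
    have pij: "p i \<noteq> p j" using inj ij by (auto simp: inj_on_def)
    have dD: "dist (p i) (p j) \<in> D" unfolding D_def dist_set_def using ij pij by auto
    hence dab: "dist (p i) (p j) = al \<or> dist (p i) (p j) = b"
      using D12 al_def2 b_def2 by (auto simp: max_def min_def)
    have "E i j \<longleftrightarrow> dist (p i) (p j) = al"
      using Eiff ij pij unfolding associated_graph_def D_def[symmetric] al_def by auto
    thus ?thesis using dab alk alb by auto
  qed
  define q where "q i = p i - c" for i
  have nq: "norm (q i) = r" if "i < N" for i
  proof -
    have "p i \<in> sphere c r" using sph' that by auto
    thus ?thesis unfolding q_def by (simp add: dist_norm norm_minus_commute)
  qed
  have dq: "dist (p i) (p j) = norm (q i - q j)" for i j unfolding q_def by (simp add: dist_norm)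
  have inq: "inner (q i) (q j) = r^2 - (dist (p i) (p j))^2 / 2" if "i < N" "j < N" for i j
  proof -
    have "(norm (q i - q j))^2 = (norm (q i))^2 + (norm (q j))^2 - 2 * inner (q i) (q j)"
      by (simp add: power2_norm_eq_inner inner_diff_left inner_diff_right inner_commute)
    hence "(dist (p i) (p j))^2 = 2 * r^2 - 2 * inner (q i) (q j)"
      using nq[OF that(1)] nq[OF that(2)] dq[of i j] by simp
    thus ?thesis by linarith
  qed
  define A where "A i j = (if E i j then 1 else 0 :: real)" for i j
  define cc where "cc = r^2 - b^2 / 2"
  define h where "h = b^2 / 2"
  define s where "s = b^2 * (k^2 - 1) / 2"
  define mu where "mu = 1 / (k^2 - 1)"
  have k2: "k^2 - 1 > 0" using k1 by (simp add: one_less_power)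
  have spos: "s > 0" unfolding s_def using bpos k2 by simp
  have mupos: "mu > 0" unfolding mu_def using k2 by simp
  have kk: "(k^2 - 1) * (1 / (k^2 - 1)) = 1" using k2 by simp
  have "s * mu = b^2 / 2 * ((k^2 - 1) * (1 / (k^2 - 1)))" unfolding s_def mu_def by (simp only: ac_simps times_divide_eq_left times_divide_eq_right divide_divide_eq_left)
  hence smu: "s * mu = h" unfolding kk h_def by simp
  have G: "inner (q i) (q j) = cc + (if i = j then h else 0) - s * A i j" if ij: "i < N" "j < N" for i j
  proof (cases "i = j")
    case True
    have "inner (q i) (q j) = r^2" using True nq[OF ij(1)] by (simp add: dot_square_norm)
    moreover have "A i j = 0" using True Eirr unfolding A_def by auto
    ultimately show ?thesis using True unfolding cc_def h_def by simp
  next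
    case False
    show ?thesis
    proof (cases "E i j")
      case True
      have "inner (q i) (q j) = r^2 - (k * b)^2 / 2" using inq[OF ij] distE[OF ij False] True by simp
      moreover have "r^2 - (k * b)^2 / 2 = cc - s"
      proof -
        have e1: "b^2 * (k^2 - 1) = b^2 * k^2 - b^2" by (simp add: right_diff_distrib)
        have e2: "(k * b)^2 = b^2 * k^2" by (simp add: power_mult_distrib)
        show ?thesis unfolding cc_def s_def e1 e2 by (simp add: diff_divide_distrib)
      qed
      ultimately show ?thesis using False True unfolding A_def by simp
    next
      case nE: False
      have "inner (q i) (q j) = r^2 - b^2 / 2" using inq[OF ij] distE[OF ij False] nE by simp
      thus ?thesis using False nE unfolding A_def cc_def by simp
    qed
  qed
  have injq: "inj_on q {..<N}" using inj unfolding q_def inj_on_def by auto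
  have ccnn: "cc \<ge> 0"
  proof (rule ccontr)
    assume "\<not> cc \<ge> 0"
    hence ccneg: "cc < 0" by simp
    have neg: "inner (q i) (q j) < 0" if "i < N" "j < N" "i \<noteq> j" for i j
    proof -
      have "s * A i j \<ge> 0" using spos unfolding A_def by simp
      thus ?thesis using G[OF that(1,2)] that(3) ccneg by simp
    qed
    show False by (rule no_neg_config[OF N_def injq neg])
  qed
  have Asym: "A i j = A j i" for i j unfolding A_def using Esym by auto
  have cardm: "CARD('n option option) = N" unfolding N_def by (simp add: card_UNIV_option)
  obtain u e where orth: "\<forall>i<N. \<forall>j<N. (\<Sum>l<N. u i l * u j l) = (if i = j then 1 else 0)"
      and eig: "\<forall>i<N. \<forall>j<N. (\<Sum>l<N. A j l * u i l) = e i * u i j"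
    using spectral_nat[OF cardm, of A] Asym by blast
  have adjC: "adj_matrix N E \<in> carrier_mat N N" unfolding adj_matrix_def by simp
  have eig': "(\<Sum>l<N. adj_matrix N E $$ (j,l) * u i l) = e i * u i j" if "i < N" "j < N" for i j
  proof -
    have "(\<Sum>l<N. adj_matrix N E $$ (j,l) * u i l) = (\<Sum>l<N. A j l * u i l)"
      using that(2) by (intro sum.cong refl) (simp add: adj_matrix_def A_def)
    thus ?thesis using eig that by simp
  qed
  have orth': "\<And>i j. i<N \<Longrightarrow> j<N \<Longrightarrow> (\<Sum>l<N. u i l * u j l) = (if i = j then 1 else 0)"
    using orth by blast
  have eigA: "\<And>i j. i<N \<Longrightarrow> j<N \<Longrightarrow> (\<Sum>l<N. A j l * u i l) = e i * u i j"
    using eig by blast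
  have cp: "char_poly (adj_matrix N E) = (\<Prod>a\<leftarrow>map e [0..<N]. [:- a, 1:])"
    and compl: "\<And>a b. a<N \<Longrightarrow> b<N \<Longrightarrow> (\<Sum>i<N. u i a * u i b) = (if a = b then 1 else 0)"
    using char_poly_from_eig[OF adjC orth' eig'] by blast+
  have evs: "adj_eigenvalues N E = rev (sort (map e [0..<N]))"
    unfolding adj_eigenvalues_def cp proots_linprod sorted_list_of_multiset_mset by (rule refl)
  define F where "F x = (\<Sum>i<N. (e i - mu) * (\<Sum>l<N. x l * u i l)^2)" for x
  have keyF: "s * F x = cc * (\<Sum>l<N. x l)^2 - (norm (\<Sum>l<N. x l *\<^sub>R q l))^2" for x
  proof -
    have g: "(norm (\<Sum>l<N. x l *\<^sub>R q l))^2 = cc * (\<Sum>l<N. x l)^2 + h * (\<Sum>l<N. x l * x l)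
           - s * (\<Sum>j<N. \<Sum>l<N. x j * A j l * x l)"
      by (rule gram_form) (rule G)
    have q1: "(\<Sum>j<N. \<Sum>l<N. x j * A j l * x l) = (\<Sum>i<N. e i * (\<Sum>l<N. x l * u i l)^2)"
      by (rule spec_quad(1)[OF orth' compl eigA])
    have q2: "(\<Sum>l<N. x l * x l) = (\<Sum>i<N. (\<Sum>l<N. x l * u i l)^2)"
      by (rule spec_quad(2)[OF orth' compl eigA])
    have "F x = (\<Sum>i<N. e i * (\<Sum>l<N. x l * u i l)^2) - mu * (\<Sum>i<N. (\<Sum>l<N. x l * u i l)^2)"
      unfolding F_def by (simp add: left_diff_distrib sum_subtractf sum_distrib_left)
    hence "s * F x = s * (\<Sum>j<N. \<Sum>l<N. x j * A j l * x l) - h * (\<Sum>l<N. x l * x l)"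
      unfolding q1 q2 smu[symmetric] by (simp add: right_diff_distrib mult.assoc)
    thus ?thesis unfolding g by simp
  qed
  have L1: "card {i. i < N \<and> e i > mu} \<le> 1"
  proof (rule ccontr)
    assume "\<not> ?thesis"
    hence "2 \<le> card {i. i < N \<and> e i > mu}" by simp
    then obtain a b' where a: "a < N" "e a > mu" and b': "b' < N" "e b' > mu" and ab: "a \<noteq> b'"
      using two_elems by blast
    define sg where "sg i = (\<Sum>l<N. u i l)" for i
    define g where "g = (if sg a = 0 \<and> sg b' = 0 then (\<lambda>i. if i = a then 1 else 0)
                         else (\<lambda>i. if i = a then sg b' else if i = b' then - sg a else (0::real)))"
    define x where "x l = (\<Sum>i<N. g i * u i l)" for l
    have coef: "(\<Sum>l<N. x l * u j l) = g j" if "j < N" for j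
      unfolding x_def by (rule synth_coef[OF orth' that])
    have gz: "g i = 0" if "i \<noteq> a" "i \<noteq> b'" for i unfolding g_def using that by auto
    have gnz: "g a \<noteq> 0 \<or> g b' \<noteq> 0" unfolding g_def using ab by auto
    have sx: "(\<Sum>l<N. x l) = (\<Sum>i<N. g i * sg i)"
      unfolding x_def sg_def by (subst sum.swap) (simp add: sum_distrib_left)
    have sx0: "(\<Sum>i<N. g i * sg i) = 0"
    proof (cases "sg a = 0 \<and> sg b' = 0")
      case True
      have "(\<Sum>i<N. g i * sg i) = (\<Sum>i<N. 0)"
        by (intro sum.cong refl) (use True in \<open>auto simp: g_def\<close>)
      thus ?thesis by simp
    next
      case False
      have "(\<Sum>i<N. g i * sg i) = (\<Sum>i<N. (if i = a then sg b' * sg a else 0) + (if i = b' then - sg a * sg b' else 0))"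
        by (intro sum.cong refl) (use False ab in \<open>auto simp: g_def\<close>)
      also have "\<dots> = sg b' * sg a + (- sg a * sg b')"
        using a(1) b'(1) by (simp add: sum.distrib)
      finally show ?thesis by simp
    qed
    have "s * F x \<le> 0" using keyF[of x] sx sx0 by simp
    hence Fle: "F x \<le> 0" using spos by (simp add: mult_le_0_iff)
    have "F x = (\<Sum>i<N. (e i - mu) * (g i)^2)" unfolding F_def by (intro sum.cong refl) (simp add: coef)
    also have "\<dots> > 0"
    proof -
      have nn: "0 \<le> (e i - mu) * (g i)^2" if "i \<in> {..<N}" for i
      proof (cases "i = a \<or> i = b'")
        case True
        hence "e i > mu" using a b' by auto
        thus ?thesis by simp
      next
        case False
        thus ?thesis using gz by simp
      qed
      show ?thesis
      proof (cases "g a \<noteq> 0")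
        case True
        have "0 < (e a - mu) * (g a)^2" using a True by simp
        thus ?thesis by (intro sum_pos2[of _ a]) (use a nn in auto)
      next
        case False
        hence "g b' \<noteq> 0" using gnz by simp
        hence "0 < (e b' - mu) * (g b')^2" using b' by simp
        thus ?thesis by (intro sum_pos2[of _ b']) (use b' nn in auto)
      qed
    qed
    finally show False using Fle by simp
  qed
  have L2: "2 \<le> card {i. i < N \<and> e i \<ge> mu}"
  proof (rule ccontr)
    assume "\<not> ?thesis"
    hence "card {i. i < N \<and> e i \<ge> mu} \<le> 1" by simp
    then obtain a where a: "\<forall>i\<in>{i. i < N \<and> e i \<ge> mu}. i = a" using one_elem by fastforce
    have lt: "e i < mu" if "i < N" "i \<noteq> a" for i using a that by (auto simp: not_le)
    obtain x where x1: "\<exists>l<N. x l \<noteq> 0" and x2: "(\<Sum>l<N. x l *\<^sub>R q l) = 0"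
      and x3: "(\<Sum>l<N. x l * u a l) = 0"
      using kernel_vec_gen[OF injq N_def, of "u a"] by blast
    have "s * F x \<ge> 0" using keyF[of x] x2 ccnn by simp
    hence Fge: "F x \<ge> 0" using spos by (simp add: zero_le_mult_iff)
    have ex: "\<exists>i<N. (\<Sum>l<N. x l * u i l) \<noteq> 0"
    proof (rule ccontr)
      assume "\<not> ?thesis"
      hence z: "\<forall>i<N. (\<Sum>l<N. x l * u i l) = 0" by simp
      have "x l = 0" if "l < N" for l by (rule spec_quad(3)[OF orth' compl eigA z that])
      thus False using x1 by blast
    qed
    then obtain i0 where i0: "i0 < N" "(\<Sum>l<N. x l * u i0 l) \<noteq> 0" by blast
    have i0a: "i0 \<noteq> a" using i0(2) x3 by auto
    have "0 < (\<Sum>i<N. - ((e i - mu) * (\<Sum>l<N. x l * u i l)^2))"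
    proof (rule sum_pos2[of _ i0])
      show "finite {..<N}" by simp
      show "i0 \<in> {..<N}" using i0 by simp
      show "0 < - ((e i0 - mu) * (\<Sum>l<N. x l * u i0 l)^2)"
        using lt[OF i0(1) i0a] i0(2) by (simp add: mult_neg_pos)
      fix i assume "i \<in> {..<N}"
      hence iN: "i < N" by simp
      show "0 \<le> - ((e i - mu) * (\<Sum>l<N. x l * u i l)^2)"
      proof (cases "i = a")
        case True thus ?thesis using x3 by simp
      next
        case False thus ?thesis using lt[OF iN False] by (simp add: mult_nonpos_nonneg)
      qed
    qed
    hence "F x < 0" unfolding F_def by (simp add: sum_negf)
    thus False using Fge by simp
  qed
  have ev1: "adj_eigenvalues N E ! 1 = mu"
    unfolding evs by (rule second_largest[OF N2 L1 L2])
  have "1 / mu + 1 = k^2" unfolding mu_def by simp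
  hence "sqrt (1 / mu + 1) = k" using k1 by simp
  thus ?thesis using ev1 mupos unfolding N_def by simp
qed

end
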